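(* Let $R$ and $Q_R$ be as in the context and let $q\in Q_R$. Then for every $\xi\in\mathbb{R}$ the complex quaternion $F_q(\xi):=\sum_{k\in\mathbb{Z}}\widehat{B_q}(\xi+2\pi k)$ is invertible in $\mathbb{H}_\mathbb{C}$; the function $\widehat{L_q}(\xi):=\widehat{B_q}(\xi)F_q(\xi)^{-1}$ lies in $L^1(\mathbb{R},\mathbb{H}_\mathbb{C})\cap L^2(\mathbb{R},\mathbb{H}_\mathbb{C})$; and the function $$L_q(x):=\frac1{2\pi}\int_\mathbb{R}\widehat{L_q}(\xi)e^{i\xi x}d\xi,\qquad x\in\mathbb{R},$$ satisfies $L_q(m)=\delta_{m,0}$ for all $m\in\mathbb{Z}$.
   Context: $\mathbb{H}_\mathbb{R}$ denotes the real quaternions $a+v_1e_1+v_2e_2+v_3e_3$ with $e_1^2=e_2^2=e_3^2=-1$, $e_1e_2=e_3$, $e_2e_3=e_1$, $e_3e_1=e_2$; $\mathbb{H}_\mathbb{C}$ the complex quaternions (complex coefficients, $i$ commuting with every $e_j$). For $q=a+v$, $v=\sum v_je_j$, $|v|=(\sum v_j^2)^{1/2}$. Quaternionic power: for $z\in\mathbb{C}\setminus\{0\}$, $p=b+u\in\mathbb{H}_\mathbb{R}$, $u\ne0$: $z^p:=z^b[\cos(|u|\log z)+\frac{u}{|u|}\sin(|u|\log z)]$ (principal $\log$, $z^b=e^{b\log z}$). $\Xi(\xi):=\frac{1-e^{-i\xi}}{i\xi}$, $\Xi(0):=1$; $\widehat{B_q}(\xi):=\Xi(\xi)^q$ and $B_q$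 is its inverse Fourier transform (Fourier transform $\hat f(\xi)=\int f(x)e^{-i\xi x}dx$). Classical Hurwitz zeta: $\zeta(s,a)=\sum_{k\ge0}(a+k)^{-s}$. Standing assumption: $R\subset\{w\in\mathbb{C}:\mathrm{Re}\,w>1\}$ is a set with $\overline R=R$ such that for every $w\in R$ and every $\alpha\in(0,1)$, $\zeta(w,\alpha)+e^{-i\pi w}\zeta(w,1-\alpha)\neq0$. Define $Q_R:=\{q=a+v\in\mathbb{H}_\mathbb{R}: v\ne0,\ a+i|v|\in R\}$. *)

theory Defs
  imports "HOL-Analysis.Analysis"
begin

text \<open>Real quaternions are modelled as real^4 and complex quaternions as complex^4;
  component 0 is the scalar part, components 1,2,3 are the coefficients of e1,e2,e3.\<close>

type_synonym hquat = "real ^ 4"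
type_synonym cquat = "complex ^ 4"

definition mk4 :: "'a \<Rightarrow> 'a \<Rightarrow> 'a \<Rightarrow> 'a \<Rightarrow> 'a ^ 4" where
  "mk4 a b c d = (\<chi> i. if i = 0 then a else if i = 1 then b else if i = 2 then c else d)"

definition cq_mult :: "cquat \<Rightarrow> cquat \<Rightarrow> cquat" (infixl "\<otimes>\<^sub>H" 70) where
  "x \<otimes>\<^sub>H y = mk4
     (x$0*y$0 - x$1*y$1 - x$2*y$2 - x$3*y$3)
     (x$0*y$1 + x$1*y$0 + x$2*y$3 - x$3*y$2)
     (x$0*y$2 + x$2*y$0 + x$3*y$1 - x$1*y$3)
     (x$0*y$3 + x$3*y$0 + x$1*y$2 - x$2*y$1)"

definition cq_one :: cquat where
  "cq_one = mk4 1 0 0 0"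

definition cq_invertible :: "cquat \<Rightarrow> bool" where
  "cq_invertible x \<longleftrightarrow> (\<exists>y. x \<otimes>\<^sub>H y = cq_one \<and> y \<otimes>\<^sub>H x = cq_one)"

definition cq_inverse :: "cquat \<Rightarrow> cquat" where
  "cq_inverse x = (THE y. x \<otimes>\<^sub>H y = cq_one \<and> y \<otimes>\<^sub>H x = cq_one)"

definition hq_re :: "hquat \<Rightarrow> real" where
  "hq_re q = q$0"

definition hq_vnorm :: "hquat \<Rightarrow> real" where
  "hq_vnorm q = sqrt ((q$1)^2 + (q$2)^2 + (q$3)^2)"

text \<open>For z = 0 we use the convention 0^p = 0
  (only relevant at the zeros of Xi; there b > 1).\<close>
definition cq_power :: "complex \<Rightarrow> hquat \<Rightarrow> cquat" where
  "cq_power z p =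
     (if z = 0 then 0 else
      (let b = hq_re p; r = hq_vnorm p; w = of_real r * Ln z
       in mk4 (z powr (of_real b) * cos w)
                  (z powr (of_real b) * of_real (p$1 / r) * sin w)
                  (z powr (of_real b) * of_real (p$2 / r) * sin w)
                  (z powr (of_real b) * of_real (p$3 / r) * sin w)))"

definition Xi :: "real \<Rightarrow> complex" where
  "Xi \<xi> = (if \<xi> = 0 then 1 else (1 - exp (- \<i> * of_real \<xi>)) / (\<i> * of_real \<xi>))"

definition Bhat :: "hquat \<Rightarrow> real \<Rightarrow> cquat" where
  "Bhat q \<xi> = cq_power (Xi \<xi>) q"

definition Fq :: "hquat \<Rightarrow> real \<Rightarrow> cquat" where
  "Fq q \<xi> = (\<Sum>\<^sub>\<infinity>k::int. Bhat q (\<xi> + 2 * pi * of_int k))"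

definition Lhat :: "hquat \<Rightarrow> real \<Rightarrow> cquat" where
  "Lhat q \<xi> = Bhat q \<xi> \<otimes>\<^sub>H cq_inverse (Fq q \<xi>)"

definition Lq :: "hquat \<Rightarrow> real \<Rightarrow> cquat" where
  "Lq q x = (1 / (2 * pi)) *\<^sub>R
     integral\<^sup>L lborel (\<lambda>\<xi>. exp (\<i> * of_real \<xi> * of_real x) *s Lhat q \<xi>)"

definition hurwitz_zeta :: "complex \<Rightarrow> real \<Rightarrow> complex" where
  "hurwitz_zeta s a = (\<Sum>k. (of_real (a + real k)) powr (- s))"

definition admissible_R :: "complex set \<Rightarrow> bool" where
  "admissible_R R \<longleftrightarrow>
     R \<subseteq> {w. Re w > 1} \<and> cnj ` R = R \<and>
     (\<forall>w\<in>R. \<forall>\<alpha>::real. 0 < \<alpha> \<and> \<alpha> < 1 \<longrightarrow>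
        hurwitz_zeta w \<alpha> + exp (- \<i> * of_real pi * w) * hurwitz_zeta w (1 - \<alpha>) \<noteq> 0)"

definition Q_R :: "complex set \<Rightarrow> hquat set" where
  "Q_R R = {q. hq_vnorm q \<noteq> 0 \<and> Complex (hq_re q) (hq_vnorm q) \<in> R}"

end

theory Submission
  imports Defs
begin

lemma mk4_nth [simp]:
  "mk4 a b c d $ 0 = a" "mk4 a b c d $ 1 = b" "mk4 a b c d $ 2 = c" "mk4 a b c d $ 3 = d"
  by (simp_all add: mk4_def)

lemma vec4_eqI:
  fixes x y :: "'a ^ 4"
  assumes "x$0 = y$0" "x$1 = y$1" "x$2 = y$2" "x$3 = y$3"
  shows "x = y"
proof -
  have "\<forall>i::4. x$i = y$i"
  proof
    fix i :: 4
      have h4: "(4::4) = 0" by simp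
      show "x$i = y$i" using assms exhaust_4[of i] by (metis h4)
  qed
  thus ?thesis by (simp add: vec_eq_iff)
qed

lemma cq_mult_assoc: "(x \<otimes>\<^sub>H y) \<otimes>\<^sub>H z = x \<otimes>\<^sub>H (y \<otimes>\<^sub>H z)"
  by (rule vec4_eqI) (simp_all add: cq_mult_def algebra_simps)

lemma cq_inverse_eq:
  assumes "x \<otimes>\<^sub>H y = cq_one" "y \<otimes>\<^sub>H x = cq_one"
  shows "cq_invertible x" "cq_inverse x = y"
proof -
  show "cq_invertible x" using assms unfolding cq_invertible_def by blast
  have one: "cq_one \<otimes>\<^sub>H z = z" "z \<otimes>\<^sub>H cq_one = z" for z
    by (rule vec4_eqI; simp add: cq_mult_def cq_one_def)+
  show "cq_inverse x = y" unfolding cq_inverse_def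
  proof (rule the_equality)
    fix y' assume h: "x \<otimes>\<^sub>H y' = cq_one \<and> y' \<otimes>\<^sub>H x = cq_one"
    have "y' = (y \<otimes>\<^sub>H x) \<otimes>\<^sub>H y'" using assms one by simp
    also have "\<dots> = y \<otimes>\<^sub>H (x \<otimes>\<^sub>H y')" by (rule cq_mult_assoc)
    also have "\<dots> = y" using h one by simp
    finally show "y' = y" .
  qed (use assms in auto)
qed

definition QF :: "complex \<Rightarrow> complex \<Rightarrow> complex \<Rightarrow> complex \<Rightarrow> complex \<Rightarrow> cquat" where
  "QF u1 u2 u3 P M = mk4 ((P+M)/2) (u1*((P-M)/(2*\<i>))) (u2*((P-M)/(2*\<i>))) (u3*((P-M)/(2*\<i>)))"

lemma QF_mult:
  assumes "u1^2 + u2^2 + u3^2 = 1"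
  shows "QF u1 u2 u3 P M \<otimes>\<^sub>H QF u1 u2 u3 P' M' = QF u1 u2 u3 (P*P') (M*M')"
proof (rule vec4_eqI)
  have u3: "u3^2 = 1 - u1^2 - u2^2" using assms by (simp add: algebra_simps)
  show "(QF u1 u2 u3 P M \<otimes>\<^sub>H QF u1 u2 u3 P' M') $ 0 = QF u1 u2 u3 (P * P') (M * M') $ 0"
    by (simp add: cq_mult_def QF_def field_simps power2_eq_square u3[unfolded power2_eq_square])
qed (simp_all add: cq_mult_def QF_def field_simps power2_eq_square; simp add: algebra_simps power2_eq_square)+

lemma QF_one: "QF u1 u2 u3 1 1 = cq_one"
  by (rule vec4_eqI) (simp_all add: QF_def cq_one_def)

lemma QF_zero: "QF u1 u2 u3 0 0 = 0"
  by (rule vec4_eqI) (simp_all add: QF_def)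

lemma QF_lin: "QF u1 u2 u3 P M = P *s QF u1 u2 u3 1 0 + M *s QF u1 u2 u3 0 1"
  by (rule vec4_eqI) (simp_all add: QF_def field_simps)

lemma QF_scale: "c *s QF u1 u2 u3 P M = QF u1 u2 u3 (c*P) (c*M)"
  by (rule vec4_eqI) (simp_all add: QF_def field_simps)

lemma scaleR_vs: "c *\<^sub>R (x::complex^4) = complex_of_real c *s x"
proof -
  have "(c *\<^sub>R x) $ i = (complex_of_real c *s x) $ i" for i
    by (simp only: vector_scaleR_component vector_smult_component scaleR_conv_of_real[where 'a=complex])
  thus ?thesis by (simp add: vec_eq_iff)
qed

lemma QF_scaleR: "c *\<^sub>R QF u1 u2 u3 P M = QF u1 u2 u3 (of_real c*P) (of_real c*M)"
  by (simp only: scaleR_vs QF_scale)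

lemma bounded_linear_vs: "bounded_linear (\<lambda>c::complex. c *s (v::complex^4))"
proof (rule bounded_linear_intro[where K="norm v"])
  show "(x + y) *s v = x *s v + y *s v" for x y by (simp add: vec_eq_iff algebra_simps)
  show "r *\<^sub>R x *s v = r *\<^sub>R (x *s v)" for r x by (simp add: scaleR_vs vec_eq_iff scaleR_conv_of_real[where 'a=complex])
  show "norm (x *s v) \<le> norm x * norm v" for x
  proof -
    have "norm (x *s v) = norm x * norm v"
      unfolding norm_vec_def
      by (simp add: norm_mult power_mult_distrib sum_distrib_left[symmetric] real_sqrt_mult L2_set_def)
    thus ?thesis by simp
  qed
qed

lemma cq_power_QF:
  assumes "hq_vnorm q \<noteq> 0"
  shows "cq_power z q = QF (of_real (q$1 / hq_vnorm q)) (of_real (q$2 / hq_vnorm q)) (of_real (q$3 / hq_vnorm q))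
           (z powr Complex (hq_re q) (hq_vnorm q)) (z powr Complex (hq_re q) (- hq_vnorm q))"
proof (cases "z = 0")
  case True thus ?thesis by (simp add: cq_power_def QF_zero)
next
  case False
  note defs = cq_power_def QF_def Let_def
  let ?b = "hq_re q" and ?r = "hq_vnorm q" and ?L = "Ln z"
  have e1: "z powr Complex ?b ?r = exp (of_real ?b * ?L) * exp (\<i> * (of_real ?r * ?L))"
    using False by (simp add: powr_def Complex_eq exp_add[symmetric] algebra_simps)
  have e2: "z powr Complex ?b (-?r) = exp (of_real ?b * ?L) * exp (- (\<i> * (of_real ?r * ?L)))"
    using False by (simp add: powr_def Complex_eq exp_add[symmetric] algebra_simps)
  have pb: "z powr of_real ?b = exp (of_real ?b * ?L)" using False by (simp add: powr_def)
  have c: "z powr of_real ?b * cos (of_real ?r * ?L) = (z powr Complex ?b ?r + z powr Complex ?b (-?r)) / 2"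
    unfolding e1 e2 pb cos_exp_eq by (simp add: field_simps)
  have s: "z powr of_real ?b * x * sin (of_real ?r * ?L) = x * ((z powr Complex ?b ?r - z powr Complex ?b (-?r)) / (2*\<i>))" for x
  proof -
    have "z powr of_real ?b * sin (of_real ?r * ?L) = (z powr Complex ?b ?r - z powr Complex ?b (-?r)) / (2*\<i>)"
      unfolding e1 e2 pb sin_exp_eq by (simp add: field_simps)
    thus ?thesis by (metis mult.assoc mult.commute)
  qed
  show ?thesis
    apply (intro vec4_eqI)
    using False apply (simp_all only: cq_power_def QF_def Let_def mk4_nth if_False c s)
    done
qed

lemma exp_minus_i_real: "exp (- (\<i> * complex_of_real t)) = Complex (cos t) (- sin t)"
proof -
  have "exp (- (\<i> * complex_of_real t)) = exp (\<i> * complex_of_real (-t))" by simp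
  also have "\<dots> = cis (-t)" by (simp add: cis_conv_exp)
  finally show ?thesis by (simp add: cis.ctr)
qed

lemma Xi_formula:
  assumes "t \<noteq> 0"
  shows "Xi t = Complex (sin t / t) ((cos t - 1) / t)"
proof -
  have "Xi t = (1 - exp (- (\<i> * complex_of_real t))) / (\<i> * complex_of_real t)"
    using assms by (simp add: Xi_def)
  also have "\<dots> = Complex (sin t / t) ((cos t - 1) / t)"
  proof -
    have "1 - exp (- (\<i> * complex_of_real t)) = Complex (sin t / t) ((cos t - 1) / t) * (\<i> * complex_of_real t)"
      using assms by (simp add: exp_minus_i_real complex_eq_iff field_simps)
    thus ?thesis using assms by simp
  qed
  finally show ?thesis .
qed

lemma Xi_Re: "Re (Xi t) = (if t = 0 then 1 else sin t / t)"
  using Xi_formula[of t] by (simp add: Xi_def)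
lemma Xi_Im: "Im (Xi t) = (if t = 0 then 0 else (cos t - 1) / t)"
  using Xi_formula[of t] by (simp add: Xi_def)

lemma norm_Xi_sq: "t \<noteq> 0 \<Longrightarrow> (norm (Xi t))^2 = (2 - 2 * cos t) / t^2"
proof -
  assume t: "t \<noteq> 0"
  have "(norm (Xi t))^2 = (sin t / t)^2 + ((cos t - 1)/t)^2"
    using t by (simp add: Xi_formula cmod_power2)
  also have "\<dots> = ((sin t)^2 + (cos t - 1)^2) / t^2"
    by (simp add: power_divide add_divide_distrib)
  also have "\<dots> = (2 - 2 * cos t) / t^2" by (simp add: sin_squared_eq power2_eq_square algebra_simps)
  finally show ?thesis .
qed

lemma norm_Xi_le1: "norm (Xi t) \<le> 1"
proof (cases "t = 0")
  case True thus ?thesis by (simp add: Xi_def)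
next
  case False
  have c: "cos t = 1 - 2 * (sin (t/2))^2"
    using cos_double_sin[of "t/2"] by simp
  have s: "\<bar>sin (t/2)\<bar> \<le> \<bar>t/2\<bar>" by (rule abs_sin_x_le_abs_x)
  hence "(sin (t/2))^2 \<le> (t/2)^2"
    by (metis abs_ge_zero power2_abs power_mono)
  hence "4 * (sin (t/2))^2 \<le> t^2" by (simp add: power_divide)
  hence "(2 - 2 * cos t) / t^2 \<le> 1" using False by (simp add: c)
  hence "(norm (Xi t))^2 \<le> 1"
    using False by (simp add: norm_Xi_sq)
  thus ?thesis
    by (metis abs_norm_cancel abs_square_le_1)
qed

lemma norm_Xi_le2: "norm (Xi t) * \<bar>t\<bar> \<le> 2"
proof (cases "t = 0")
  case True thus ?thesis by simp
next
  case False
  have "(norm (Xi t) * \<bar>t\<bar>)^2 = 2 - 2 * cos t"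
    using False by (simp add: power_mult_distrib norm_Xi_sq)
  also have "\<dots> \<le> 2^2" using cos_ge_minus_one[of t] by (simp add: power2_eq_square; linarith)
  finally show ?thesis
    by (rule power2_le_imp_le) simp
qed

lemma Xi_nonpos_Reals: "Xi t \<in> \<real>\<^sub>\<le>\<^sub>0 \<Longrightarrow> Xi t = 0"
proof -
  assume h: "Xi t \<in> \<real>\<^sub>\<le>\<^sub>0"
  hence t: "t \<noteq> 0" by (auto simp: Xi_def complex_nonpos_Reals_iff)
  from h have "Im (Xi t) = 0" by (auto simp: complex_nonpos_Reals_iff)
  hence "cos t = 1" using t by (simp add: Xi_Im)
  hence "sin t = 0" using sin_cos_squared_add[of t] by simp
  thus "Xi t = 0" using t \<open>cos t = 1\<close> by (simp add: Xi_formula Complex_eq)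
qed

lemma Xi_Complex: "Xi t = Complex (if t = 0 then 1 else sin t / t) (if t = 0 then 0 else (cos t - 1) / t)"
  by (simp add: complex_eq_iff Xi_Re Xi_Im)

lemma isCont_ifzero:
  fixes g :: "real \<Rightarrow> real"
  assumes "(g \<longlongrightarrow> c) (at 0)" "\<And>x. x \<noteq> 0 \<Longrightarrow> isCont g x"
  shows "isCont (\<lambda>t. if t = 0 then c else g t) x"
proof (cases "x = 0")
  case True
  have "((\<lambda>t. if t = 0 then c else g t) \<longlongrightarrow> c) (at 0)"
    using assms(1) by (rule tendsto_cong[THEN iffD1, rotated]) (simp add: eventually_at_filter)
  thus ?thesis using True by (simp add: isCont_def)
next
  case False
  have "\<forall>\<^sub>F t in nhds x. g t = (if t = 0 then c else g t)"
    using t1_space_nhds[OF False] by eventually_elim simp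
  hence "isCont g x = isCont (\<lambda>t. if t = 0 then c else g t) x"
    by (rule isCont_cong)
  thus ?thesis using assms(2)[OF False] by simp
qed

lemma isCont_Xi: "isCont Xi x"
proof -
  have s: "((\<lambda>t::real. sin t / t) \<longlongrightarrow> 1) (at 0)"
  proof -
    have "((\<lambda>y. (sin y - sin 0) / (y - 0)) \<longlongrightarrow> cos 0) (at (0::real))"
      using DERIV_sin[of "0::real"] unfolding has_field_derivative_iff .
    thus ?thesis by simp
  qed
  have c: "((\<lambda>t::real. (cos t - 1) / t) \<longlongrightarrow> 0) (at 0)"
  proof -
    have "((\<lambda>y. (cos y - cos 0) / (y - 0)) \<longlongrightarrow> - sin 0) (at (0::real))"
      using DERIV_cos[of "0::real"] unfolding has_field_derivative_iff .
    thus ?thesis by simp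
  qed
  have "isCont (\<lambda>t. if t = 0 then 1 else sin t / t) x"
    by (rule isCont_ifzero[OF s]) (intro continuous_intros, simp)
  moreover have "isCont (\<lambda>t. if t = 0 then 0 else (cos t - 1) / t) x"
    by (rule isCont_ifzero[OF c]) (intro continuous_intros, simp)
  ultimately have "isCont (\<lambda>t. Complex (if t = 0 then 1 else sin t / t) (if t = 0 then 0 else (cos t - 1) / t)) x"
    unfolding isCont_def by (rule tendsto_Complex)
  thus ?thesis by (subst (asm) Xi_Complex[symmetric])
qed

lemma isCont_Xi_powr:
  assumes "Re w > 0"
  shows "isCont (\<lambda>t. Xi t powr w) x"
  unfolding isCont_def
proof (rule tendsto_powr_complex')
  show "Xi x \<notin> \<real>\<^sub>\<le>\<^sub>0 \<or> Xi x = 0 \<and> 0 < Re w"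
    using Xi_nonpos_Reals[of x] assms by auto
qed (use isCont_Xi[of x] in \<open>auto simp: isCont_def\<close>)

lemma norm_powr_bound:
  fixes z w :: complex
  shows "norm (z powr w) \<le> exp (pi * \<bar>Im w\<bar>) * norm z powr Re w"
proof (cases "z = 0")
  case True thus ?thesis by simp
next
  case False
  have "- Im w * Arg z \<le> pi * \<bar>Im w\<bar>"
  proof -
    have "\<bar>Arg z\<bar> \<le> pi" using Arg_bounded[of z] by auto
    hence "\<bar>Im w * Arg z\<bar> \<le> \<bar>Im w\<bar> * pi" by (simp add: abs_mult mult_left_mono)
    thus ?thesis by (simp add: abs_le_iff mult.commute)
  qed
  thus ?thesis by (auto simp: norm_powr_complex mult.commute intro!: mult_left_mono)
qed

definition fw :: "complex \<Rightarrow> real \<Rightarrow> complex" where "fw w t = Xi t powr w"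

lemma fw_le_E:
  assumes "Re w \<ge> 0"
  shows "norm (fw w t) \<le> exp (pi * \<bar>Im w\<bar>)"
proof -
  have "norm (Xi t) powr Re w \<le> 1"
    using norm_Xi_le1[of t] assms by (simp add: powr_le1)
  thus ?thesis using norm_powr_bound[of "Xi t" w] unfolding fw_def
    by (smt (verit, best) exp_gt_zero mult_left_le)
qed

lemma fw_le_far:
  assumes "Re w \<ge> 0" "a > 0" "2 * a \<le> \<bar>t\<bar>"
  shows "norm (fw w t) \<le> exp (pi * \<bar>Im w\<bar>) * a powr (- Re w)"
proof -
  have t: "\<bar>t\<bar> > 0" using assms by linarith
  have "norm (Xi t) \<le> 2 / \<bar>t\<bar>" using norm_Xi_le2[of t] t by (simp add: field_simps)
  also have "\<dots> \<le> 1 / a" using assms t by (simp add: field_simps)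
  finally have "norm (Xi t) powr Re w \<le> (1/a) powr Re w"
    using assms by (intro powr_mono2) auto
  also have "\<dots> = a powr (- Re w)" using assms by (simp add: powr_minus_divide powr_divide)
  finally show ?thesis using norm_powr_bound[of "Xi t" w] unfolding fw_def
    by (smt (verit, best) exp_gt_zero mult_left_mono)
qed

lemma fw_shift_bounds:
  assumes "Re w \<ge> 0" "n \<ge> 1" "\<bar>\<xi>\<bar> \<le> real n"
  shows "norm (fw w (\<xi> + 2 * pi * real n)) \<le> exp (pi * \<bar>Im w\<bar>) * real n powr (- Re w)"
    and "norm (fw w (\<xi> - 2 * pi * (real n + 1))) \<le> exp (pi * \<bar>Im w\<bar>) * real n powr (- Re w)"
proof -
  have n: "real n \<ge> 1" using assms by simp
  have pn: "6 * real n \<le> 2 * pi * real n" using pi_gt3 by (intro mult_right_mono) auto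
  have "2 * real n \<le> \<bar>\<xi> + 2 * pi * real n\<bar>" using assms pn n by (smt (verit))
  thus "norm (fw w (\<xi> + 2 * pi * real n)) \<le> exp (pi * \<bar>Im w\<bar>) * real n powr (- Re w)"
    using n assms by (intro fw_le_far) auto
  have pn1: "2 * pi * (real n + 1) = 2 * pi * real n + 2 * pi" by (simp add: algebra_simps)
  have "2 * real n \<le> \<bar>\<xi> - 2 * pi * (real n + 1)\<bar>" unfolding pn1 using pi_gt3 assms pn n by (smt (verit))
  thus "norm (fw w (\<xi> - 2 * pi * (real n + 1))) \<le> exp (pi * \<bar>Im w\<bar>) * real n powr (- Re w)"
    using n assms by (intro fw_le_far) auto
qed

lemma summable_npowr: "s > 1 \<Longrightarrow> summable (\<lambda>n. real n powr (- s))"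
  by (simp add: summable_real_powr_iff)

lemma int_has_sum_split:
  fixes \<phi> :: "int \<Rightarrow> 'a::banach"
  assumes "summable (\<lambda>n. norm (\<phi> (int n)))" "summable (\<lambda>n. norm (\<phi> (- int n - 1)))"
  shows "(\<phi> has_sum (\<Sum>n. \<phi> (int n) + \<phi> (- int n - 1))) UNIV"
proof -
  have A: "((\<lambda>n. \<phi> (int n)) has_sum (\<Sum>n. \<phi> (int n))) UNIV"
    using norm_summable_imp_has_sum[OF assms(1) summable_sums[OF summable_norm_cancel[OF assms(1)]]] .
  have B: "((\<lambda>n. \<phi> (- int n - 1)) has_sum (\<Sum>n. \<phi> (- int n - 1))) UNIV"
    using norm_summable_imp_has_sum[OF assms(2) summable_sums[OF summable_norm_cancel[OF assms(2)]]] .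
  have A': "(\<phi> has_sum (\<Sum>n. \<phi> (int n))) (int ` UNIV)"
    using A by (subst has_sum_reindex) (auto simp: o_def)
  have B': "(\<phi> has_sum (\<Sum>n. \<phi> (- int n - 1))) ((\<lambda>n. - int n - 1) ` UNIV)"
    using B by (subst has_sum_reindex) (auto simp: o_def inj_on_def)
  have U: "int ` UNIV \<union> (\<lambda>n. - int n - 1) ` UNIV = (UNIV :: int set)"
  proof -
    have "k \<in> int ` UNIV \<union> (\<lambda>n. - int n - 1) ` UNIV" for k :: int
    proof (cases "k \<ge> 0")
      case True thus ?thesis by (metis UnI1 nonneg_int_cases rangeI)
    next
      case False
      hence "k = - int (nat (- k - 1)) - 1" by simp
      thus ?thesis by blast
    qed
    thus ?thesis by blast
  qed
  have D: "int ` UNIV \<inter> (\<lambda>n. - int n - 1) ` UNIV = {}" by auto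
  have "(\<phi> has_sum ((\<Sum>n. \<phi> (int n)) + (\<Sum>n. \<phi> (- int n - 1)))) UNIV"
    using has_sum_Un_disjoint[OF A' B' D] unfolding U .
  moreover have "(\<Sum>n. \<phi> (int n)) + (\<Sum>n. \<phi> (- int n - 1)) = (\<Sum>n. \<phi> (int n) + \<phi> (- int n - 1))"
    using suminf_add[OF summable_norm_cancel[OF assms(1)] summable_norm_cancel[OF assms(2)]] .
  ultimately show ?thesis by simp
qed

definition Tw :: "complex \<Rightarrow> real \<Rightarrow> complex" where
  "Tw w \<xi> = (\<Sum>\<^sub>\<infinity>k::int. fw w (\<xi> + 2 * pi * of_int k))"

lemma fw_summable:
  assumes "Re w > 1"
  shows "summable (\<lambda>n. norm (fw w (\<xi> + 2 * pi * real n)))"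
    and "summable (\<lambda>n. norm (fw w (\<xi> - 2 * pi * (real n + 1))))"
proof -
  define N where "N = nat \<lceil>\<bar>\<xi>\<bar>\<rceil> + 1"
  have N: "n \<ge> N \<Longrightarrow> n \<ge> 1 \<and> \<bar>\<xi>\<bar> \<le> real n" for n
    unfolding N_def by linarith
  have S: "summable (\<lambda>n. exp (pi * \<bar>Im w\<bar>) * real n powr (- Re w))"
    using assms by (intro summable_mult summable_npowr)
  have w0: "Re w \<ge> 0" using assms by simp
  show "summable (\<lambda>n. norm (fw w (\<xi> + 2 * pi * real n)))"
  proof (rule summable_comparison_test'[OF S, where N=N])
    fix n assume "n \<ge> N"
    from N[OF this] show "norm (norm (fw w (\<xi> + 2 * pi * real n))) \<le> exp (pi * \<bar>Im w\<bar>) * real n powr (- Re w)"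
      using fw_shift_bounds(1)[OF w0, of n \<xi>] by simp
  qed
  show "summable (\<lambda>n. norm (fw w (\<xi> - 2 * pi * (real n + 1))))"
  proof (rule summable_comparison_test'[OF S, where N=N])
    fix n assume "n \<ge> N"
    from N[OF this] show "norm (norm (fw w (\<xi> - 2 * pi * (real n + 1)))) \<le> exp (pi * \<bar>Im w\<bar>) * real n powr (- Re w)"
      using fw_shift_bounds(2)[OF w0, of n \<xi>] by simp
  qed
qed

lemma Tw_has_sum:
  assumes "Re w > 1"
  shows "((\<lambda>k::int. fw w (\<xi> + 2 * pi * of_int k)) has_sum
            (\<Sum>n. fw w (\<xi> + 2 * pi * real n) + fw w (\<xi> - 2 * pi * (real n + 1)))) UNIV"
proof -
  have e: "\<xi> + 2 * pi * of_int (- int n - 1) = \<xi> - 2 * pi * (real n + 1)" for n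
    by (simp add: algebra_simps)
  show ?thesis
    using int_has_sum_split[of "\<lambda>k. fw w (\<xi> + 2 * pi * of_int k)"] fw_summable[OF assms, of \<xi>]
    unfolding e by simp
qed

lemma Tw_sums:
  assumes "Re w > 1"
  shows "(\<lambda>n. fw w (\<xi> + 2 * pi * real n) + fw w (\<xi> - 2 * pi * (real n + 1))) sums Tw w \<xi>"
proof -
  have "Tw w \<xi> = (\<Sum>n. fw w (\<xi> + 2 * pi * real n) + fw w (\<xi> - 2 * pi * (real n + 1)))"
    unfolding Tw_def using Tw_has_sum[OF assms] by (rule infsumI)
  moreover have "summable (\<lambda>n. fw w (\<xi> + 2 * pi * real n) + fw w (\<xi> - 2 * pi * (real n + 1)))"
    using summable_add[OF summable_norm_cancel[OF fw_summable(1)[OF assms, of \<xi>]] summable_norm_cancel[OF fw_summable(2)[OF assms, of \<xi>]]] .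
  ultimately show ?thesis by (simp add: summable_sums)
qed

lemma Tw_periodic:
  "Tw w (\<xi> + 2 * pi * of_int j) = Tw w \<xi>"
proof -
  have b: "bij_betw (\<lambda>k::int. k + j) UNIV UNIV"
    by (rule bij_betwI[where g="\<lambda>k. k - j"]) auto
  have "Tw w (\<xi> + 2 * pi * of_int j) = (\<Sum>\<^sub>\<infinity>k::int. fw w (\<xi> + 2 * pi * of_int (k + j)))"
    unfolding Tw_def by (simp add: algebra_simps)
  also have "\<dots> = Tw w \<xi>"
    unfolding Tw_def using infsum_reindex_bij_betw[OF b, of "\<lambda>k. fw w (\<xi> + 2 * pi * of_int k)"] .
  finally show ?thesis .
qed

lemma isCont_fw_shift:
  assumes "Re w > 0"
  shows "isCont (\<lambda>x. fw w (x + c)) x"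
  unfolding fw_def
  by (rule isCont_o2[OF _ isCont_Xi_powr[OF assms]]) (intro continuous_intros)

lemma isCont_Tw:
  assumes w: "Re w > 1"
  shows "isCont (Tw w) \<xi>0"
proof -
  define A where "A = ball \<xi>0 1"
  define N where "N = nat \<lceil>\<bar>\<xi>0\<bar> + 1\<rceil> + 1"
  define E where "E = exp (pi * \<bar>Im w\<bar>)"
  have w0: "Re w \<ge> 0" using w by simp
  let ?f = "\<lambda>n x. fw w (x + 2 * pi * real n) + fw w (x - 2 * pi * (real n + 1))"
  have bnd: "\<forall>x\<in>A. norm (?f n x) \<le> 2 * E * real n powr (- Re w)" if "n \<ge> N" for n
  proof
    fix x assume "x \<in> A"
    hence "\<bar>x\<bar> \<le> \<bar>\<xi>0\<bar> + 1" unfolding A_def by (auto simp: dist_real_def)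
    hence nx: "n \<ge> 1" "\<bar>x\<bar> \<le> real n" using that unfolding N_def by linarith+
    have "norm (?f n x) \<le> norm (fw w (x + 2 * pi * real n)) + norm (fw w (x - 2 * pi * (real n + 1)))"
      by (rule norm_triangle_ineq)
    also have "\<dots> \<le> E * real n powr (- Re w) + E * real n powr (- Re w)"
      using fw_shift_bounds[OF w0 nx] unfolding E_def by (rule add_mono)
    finally show "norm (?f n x) \<le> 2 * E * real n powr (- Re w)" by simp
  qed
  have ul: "uniform_limit A (\<lambda>n x. \<Sum>i<n. ?f i x) (\<lambda>x. \<Sum>i. ?f i x) sequentially"
  proof (rule Weierstrass_m_test_ev)
    show "\<forall>\<^sub>F n in sequentially. \<forall>x\<in>A. norm (?f n x) \<le> 2 * E * real n powr (- Re w)"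
      using bnd by (auto simp: eventually_at_top_linorder)
    show "summable (\<lambda>n. 2 * E * real n powr (- Re w))"
      using w by (intro summable_mult summable_npowr)
  qed
  have cs: "continuous_on A (\<lambda>x. \<Sum>i<n. ?f i x)" for n
  proof (intro continuous_on_sum continuous_at_imp_continuous_on ballI continuous_intros)
    fix i x
    show "isCont (\<lambda>x. fw w (x + 2 * pi * real i)) x"
      using isCont_fw_shift[of w] w by simp
    show "isCont (\<lambda>x. fw w (x - 2 * pi * (real i + 1))) x"
      using isCont_fw_shift[where w=w and c="- (2 * pi * (real i + 1))" and x=x] w by simp
  qed
  have "continuous_on A (\<lambda>x. \<Sum>i. ?f i x)"
    by (rule uniform_limit_theorem[OF _ ul]) (use cs in auto)
  moreover have "(\<Sum>i. ?f i x) = Tw w x" for x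
    using Tw_sums[OF w, of x] by (simp add: sums_iff)
  ultimately have "continuous_on A (Tw w)" by simp
  hence "\<forall>x\<in>ball \<xi>0 1. isCont (Tw w) x" unfolding A_def
    using continuous_on_eq_continuous_at[OF open_ball] by blast
  thus ?thesis by simp
qed

lemma exp_shift_int:
  "exp (- (\<i> * of_real (\<xi> + 2 * pi * of_int k))) = exp (- (\<i> * of_real \<xi>))"
proof -
  have e1: "- (\<i> * of_real (\<xi> + 2 * pi * of_int k)) = - (\<i> * of_real \<xi>) + (2 * of_int (-k) * pi) * \<i>"
    by (simp add: algebra_simps)
  have e2: "exp ((2 * of_int (-k) * pi) * \<i>) = 1"
    by (rule exp_integer_2pi) simp
  show ?thesis by (simp only: e1 exp_add e2 mult_1_right)
qed

lemma one_minus_exp_half: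
  "1 - exp (- (\<i> * of_real \<xi>)) = 2 * \<i> * of_real (sin (\<xi>/2)) * exp (- (\<i> * of_real (\<xi>/2)))"
proof -
  have "2 * \<i> * of_real (sin (\<xi>/2)) * exp (- (\<i> * of_real (\<xi>/2)))
        = (exp (\<i> * of_real (\<xi>/2)) - exp (- (\<i> * of_real (\<xi>/2)))) * exp (- (\<i> * of_real (\<xi>/2)))"
    by (simp add: sin_of_real[symmetric] sin_exp_eq)
  also have "\<dots> = exp (\<i> * of_real (\<xi>/2) + - (\<i> * of_real (\<xi>/2))) - exp (- (\<i> * of_real (\<xi>/2)) + - (\<i> * of_real (\<xi>/2)))"
    by (simp only: exp_add left_diff_distrib)
  also have "\<dots> = 1 - exp (- (\<i> * of_real \<xi>))"
  proof -
    have "\<i> * of_real (\<xi>/2) + - (\<i> * of_real (\<xi>/2)) = 0" by simp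
    moreover have "- (\<i> * of_real (\<xi>/2)) + - (\<i> * of_real (\<xi>/2)) = - (\<i> * of_real \<xi>)"
      by (simp add: field_simps)
    ultimately show ?thesis by simp
  qed
  finally show ?thesis ..
qed

lemma Xi_shift_form:
  assumes "\<xi> + 2 * pi * of_int k \<noteq> 0"
  shows "Xi (\<xi> + 2 * pi * of_int k) = of_real (2 * sin (\<xi>/2) / (\<xi> + 2 * pi * of_int k)) * exp (- (\<i> * of_real (\<xi>/2)))"
proof -
  let ?t = "\<xi> + 2 * pi * of_int k"
  have "Xi ?t = (1 - exp (- (\<i> * of_real ?t))) / (\<i> * of_real ?t)"
    using assms by (simp add: Xi_def)
  also have "\<dots> = (1 - exp (- (\<i> * of_real \<xi>))) / (\<i> * of_real ?t)"
    by (simp only: exp_shift_int)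
  also have "\<dots> = \<i> * (2 * of_real (sin (\<xi>/2)) * exp (- (\<i> * of_real (\<xi>/2)))) / (\<i> * of_real ?t)"
    unfolding one_minus_exp_half by (simp add: mult_ac)
  also have "\<dots> = (2 * of_real (sin (\<xi>/2)) * exp (- (\<i> * of_real (\<xi>/2)))) / of_real ?t"
    by (rule mult_divide_mult_cancel_left) simp
  also have "\<dots> = of_real (2 * sin (\<xi>/2) / ?t) * exp (- (\<i> * of_real (\<xi>/2)))"
    by (simp add: field_simps)
  finally show ?thesis .
qed

lemma powr_exp_Ln:
  fixes z w :: complex
  assumes "- pi < Im z" "Im z \<le> pi"
  shows "exp z powr w = exp (w * z)"
  using assms by (simp add: powr_def)

lemma of_real_powr_neg:
  fixes w :: complex
  assumes "(a::real) > 0"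
  shows "of_real a powr (- w) = exp (- w * of_real (ln a))"
proof -
  have "Ln (of_real a) = of_real (ln a)" by (rule Ln_of_real[OF assms])
  thus ?thesis using assms by (simp add: powr_def)
qed

lemma Xi_pos_powr:
  fixes w :: complex
  assumes "0 < \<xi>" "\<xi> < 2 * pi"
  shows "Xi (\<xi> + 2 * pi * real n) powr w =
           exp (w * (of_real (ln (sin (\<xi>/2) / pi)) - \<i> * of_real (\<xi>/2))) * of_real (\<xi> / (2*pi) + real n) powr (- w)"
proof -
  define c where "c = sin (\<xi>/2) / pi"
  define a where "a = \<xi> / (2*pi) + real n"
  have c: "c > 0" unfolding c_def using assms by (intro divide_pos_pos sin_gt_zero) auto
  have a: "a > 0" unfolding a_def using assms by (simp add: add_pos_nonneg)
  have "0 \<le> 2 * pi * real n" by simp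
  hence "\<xi> + 2 * pi * real n \<noteq> 0" using assms by linarith
  hence t: "\<xi> + 2 * pi * of_int (int n) \<noteq> 0" by simp
  have "2 * sin (\<xi>/2) / (\<xi> + 2 * pi * real n) = c / a"
    unfolding c_def a_def using assms by (simp add: field_simps)
  hence X: "Xi (\<xi> + 2 * pi * real n) = of_real (c / a) * exp (- (\<i> * of_real (\<xi>/2)))"
    using Xi_shift_form[OF t] by simp
  define z where "z = of_real (ln c - ln a) + - (\<i> * of_real (\<xi>/2))"
  have ca: "of_real (c / a) = exp (of_real (ln c - ln a) :: complex)"
    using a c by (simp add: exp_diff exp_of_real)
  have "Xi (\<xi> + 2 * pi * real n) = exp z"
    unfolding X z_def exp_add ca ..
  moreover have "- pi < Im z" "Im z \<le> pi" unfolding z_def using assms by auto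
  ultimately have "Xi (\<xi> + 2 * pi * real n) powr w = exp (w * z)"
    by (simp add: powr_exp_Ln)
  also have "w * z = w * (of_real (ln c) - \<i> * of_real (\<xi>/2)) + (- w * of_real (ln a))"
    unfolding z_def by (simp add: algebra_simps)
  also have "exp \<dots> = exp (w * (of_real (ln c) - \<i> * of_real (\<xi>/2))) * of_real a powr (- w)"
    by (simp only: exp_add of_real_powr_neg[OF a])
  finally show ?thesis unfolding c_def a_def .
qed

lemma Xi_neg_powr:
  fixes w :: complex
  assumes "0 < \<xi>" "\<xi> < 2 * pi"
  shows "Xi (\<xi> - 2 * pi * (real n + 1)) powr w =
           exp (w * (of_real (ln (sin (\<xi>/2) / pi)) + \<i> * of_real (pi - \<xi>/2))) * of_real (1 - \<xi> / (2*pi) + real n) powr (- w)"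
proof -
  define c where "c = sin (\<xi>/2) / pi"
  define b where "b = 1 - \<xi> / (2*pi) + real n"
  have c: "c > 0" unfolding c_def using assms by (intro divide_pos_pos sin_gt_zero) auto
  have b: "b > 0" unfolding b_def using assms by (simp add: add_pos_nonneg)
  have e: "\<xi> - 2 * pi * (real n + 1) = \<xi> + 2 * pi * of_int (- int n - 1)" by (simp add: algebra_simps)
  have t: "\<xi> + 2 * pi * of_int (- int n - 1) \<noteq> 0"
  proof -
    have "2 * pi * 1 \<le> 2 * pi * (real n + 1)" by (intro mult_left_mono) auto
    hence "\<xi> - 2 * pi * (real n + 1) < 0" using assms by linarith
    thus ?thesis unfolding e by simp
  qed
  have "2 * sin (\<xi>/2) / (\<xi> - 2 * pi * (real n + 1)) = - (c / b)"
    unfolding c_def b_def using assms t[folded e] by (simp add: field_simps)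
  hence X: "Xi (\<xi> - 2 * pi * (real n + 1)) = - of_real (c / b) * exp (- (\<i> * of_real (\<xi>/2)))"
    using Xi_shift_form[OF t] unfolding e[symmetric] by simp
  define z where "z = of_real (ln c - ln b) + \<i> * of_real (pi - \<xi>/2)"
  have cb: "of_real (c / b) = exp (of_real (ln c - ln b) :: complex)"
    using b c by (simp add: exp_diff exp_of_real)
  have ep: "exp (\<i> * of_real (pi - \<xi>/2)) = - exp (- (\<i> * of_real (\<xi>/2)))"
  proof -
    have "\<i> * of_real (pi - \<xi>/2) = \<i> * of_real pi + - (\<i> * of_real (\<xi>/2))"
      by (simp add: algebra_simps)
    thus ?thesis by (simp only: exp_add exp_pi_i') simp
  qed
  have "Xi (\<xi> - 2 * pi * (real n + 1)) = exp z"
    unfolding X z_def exp_add cb ep by simp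
  moreover have "- pi < Im z" "Im z \<le> pi" unfolding z_def using assms by auto
  ultimately have "Xi (\<xi> - 2 * pi * (real n + 1)) powr w = exp (w * z)"
    by (simp add: powr_exp_Ln)
  also have "w * z = w * (of_real (ln c) + \<i> * of_real (pi - \<xi>/2)) + (- w * of_real (ln b))"
    unfolding z_def by (simp add: algebra_simps)
  also have "exp \<dots> = exp (w * (of_real (ln c) + \<i> * of_real (pi - \<xi>/2))) * of_real b powr (- w)"
    by (simp only: exp_add of_real_powr_neg[OF b])
  finally show ?thesis unfolding c_def b_def .
qed

definition hz_cond :: "complex \<Rightarrow> bool" where
  "hz_cond w \<longleftrightarrow> (\<forall>\<alpha>::real. 0 < \<alpha> \<and> \<alpha> < 1 \<longrightarrow>
      hurwitz_zeta w \<alpha> + exp (\<i> * of_real pi * w) * hurwitz_zeta w (1 - \<alpha>) \<noteq> 0)"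

lemma Tw_nonzero_open:
  assumes w: "Re w > 1" and hz: "hz_cond w" and xi: "0 < \<xi>" "\<xi> < 2 * pi"
  shows "Tw w \<xi> \<noteq> 0"
proof -
  define \<alpha> where "\<alpha> = \<xi> / (2*pi)"
  define K1 where "K1 = exp (w * (of_real (ln (sin (\<xi>/2) / pi)) - \<i> * of_real (\<xi>/2)))"
  define K2 where "K2 = exp (w * (of_real (ln (sin (\<xi>/2) / pi)) + \<i> * of_real (pi - \<xi>/2)))"
  define h1 where "h1 n = (of_real (\<alpha> + real n) :: complex) powr (- w)" for n
  define h2 where "h2 n = (of_real ((1 - \<alpha>) + real n) :: complex) powr (- w)" for n
  have a1: "fw w (\<xi> + 2 * pi * real n) = K1 * h1 n" for n
    unfolding fw_def K1_def h1_def \<alpha>_def using Xi_pos_powr[OF xi] .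
  have a2: "fw w (\<xi> - 2 * pi * (real n + 1)) = K2 * h2 n" for n
    unfolding fw_def K2_def h2_def \<alpha>_def using Xi_neg_powr[OF xi] by simp
  have K1: "K1 \<noteq> 0" and K2: "K2 \<noteq> 0" unfolding K1_def K2_def by simp_all
  have "summable (\<lambda>n. K1 * h1 n)"
    using summable_norm_cancel[OF fw_summable(1)[OF w, of \<xi>]] unfolding a1 .
  hence s1: "summable h1" using K1 by (simp add: summable_cmult_iff)
  have "summable (\<lambda>n. K2 * h2 n)"
    using summable_norm_cancel[OF fw_summable(2)[OF w, of \<xi>]] unfolding a2 .
  hence s2: "summable h2" using K2 by (simp add: summable_cmult_iff)
  have z1: "hurwitz_zeta w \<alpha> = suminf h1" unfolding hurwitz_zeta_def h1_def ..
  have z2: "hurwitz_zeta w (1 - \<alpha>) = suminf h2" unfolding hurwitz_zeta_def h2_def ..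
  have "(\<lambda>n. K1 * h1 n + K2 * h2 n) sums (K1 * suminf h1 + K2 * suminf h2)"
    by (intro sums_add sums_mult summable_sums s1 s2)
  moreover have "(\<lambda>n. K1 * h1 n + K2 * h2 n) sums Tw w \<xi>"
    using Tw_sums[OF w, of \<xi>] unfolding a1 a2 .
  ultimately have T: "Tw w \<xi> = K1 * suminf h1 + K2 * suminf h2"
    using sums_unique2 by blast
  have "K2 = K1 * exp (\<i> * of_real pi * w)"
    unfolding K1_def K2_def by (simp add: exp_add[symmetric] algebra_simps)
  hence "Tw w \<xi> = K1 * (hurwitz_zeta w \<alpha> + exp (\<i> * of_real pi * w) * hurwitz_zeta w (1 - \<alpha>))"
    unfolding T z1 z2 by (simp add: algebra_simps)
  moreover have "0 < \<alpha>" "\<alpha> < 1" unfolding \<alpha>_def using xi by auto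
  ultimately show ?thesis using hz K1 unfolding hz_cond_def by auto
qed

lemma Xi_2pi_int: "k \<noteq> 0 \<Longrightarrow> Xi (2 * pi * of_int k) = 0"
  using Xi_shift_form[of 0 k] by simp

lemma Tw_zero:
  assumes w: "Re w > 1"
  shows "Tw w 0 = 1"
proof -
  have e: "fw w (0 + 2 * pi * real n) + fw w (0 - 2 * pi * (real n + 1)) = (if n = 0 then 1 else 0)" for n
  proof -
    have "fw w (0 - 2 * pi * (real n + 1)) = 0"
    proof -
      have eq: "0 - 2 * pi * (real n + 1) = 2 * pi * of_int (- int n - 1)" by (simp add: algebra_simps)
      have "Xi (2 * pi * of_int (- int n - 1)) = 0" by (rule Xi_2pi_int) simp
      thus ?thesis unfolding fw_def eq by simp
    qed
    moreover have "fw w (0 + 2 * pi * real n) = (if n = 0 then 1 else 0)"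
      using Xi_2pi_int[of "int n"] unfolding fw_def by (simp add: Xi_def)
    ultimately show ?thesis by simp
  qed
  have "(\<lambda>n. if n = 0 then (1::complex) else 0) sums Tw w 0"
    using Tw_sums[OF w, of 0] unfolding e .
  moreover have "(\<lambda>n. if n = 0 then (1::complex) else 0) sums 1"
    using sums_single[of 0 "\<lambda>_. 1::complex"] by simp
  ultimately show ?thesis using sums_unique2 by blast
qed

lemma Tw_nonzero:
  assumes w: "Re w > 1" and hz: "hz_cond w"
  shows "Tw w \<xi> \<noteq> 0"
proof -
  define k where "k = \<lfloor>\<xi> / (2*pi)\<rfloor>"
  define \<xi>' where "\<xi>' = \<xi> - 2 * pi * of_int k"
  have "of_int k \<le> \<xi> / (2*pi)" "\<xi> / (2*pi) < of_int k + 1" unfolding k_def by linarith+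
  hence "2 * pi * of_int k \<le> \<xi>" "\<xi> < 2 * pi * (of_int k + 1)"
    by (simp_all add: field_simps)
  hence r: "0 \<le> \<xi>'" "\<xi>' < 2 * pi" unfolding \<xi>'_def by (simp_all add: algebra_simps)
  have "Tw w \<xi> = Tw w (\<xi>' + 2 * pi * of_int k)" unfolding \<xi>'_def by simp
  also have "\<dots> = Tw w \<xi>'" by (rule Tw_periodic)
  finally have "Tw w \<xi> = Tw w \<xi>'" .
  moreover have "Tw w \<xi>' \<noteq> 0"
  proof (cases "\<xi>' = 0")
    case True thus ?thesis using Tw_zero[OF w] by simp
  next
    case False thus ?thesis using r Tw_nonzero_open[OF w hz] by simp
  qed
  ultimately show ?thesis by simp
qed

lemma Tw_reduce: "\<exists>\<xi>'. 0 \<le> \<xi>' \<and> \<xi>' < 2 * pi \<and> Tw w \<xi> = Tw w \<xi>'"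
proof -
  define k where "k = \<lfloor>\<xi> / (2*pi)\<rfloor>"
  define \<xi>' where "\<xi>' = \<xi> - 2 * pi * of_int k"
  have "of_int k \<le> \<xi> / (2*pi)" "\<xi> / (2*pi) < of_int k + 1" unfolding k_def by linarith+
  hence "2 * pi * of_int k \<le> \<xi>" "\<xi> < 2 * pi * (of_int k + 1)"
    by (simp_all add: field_simps)
  hence r: "0 \<le> \<xi>'" "\<xi>' < 2 * pi" unfolding \<xi>'_def by (simp_all add: algebra_simps)
  have "Tw w \<xi> = Tw w (\<xi>' + 2 * pi * of_int k)" unfolding \<xi>'_def by simp
  also have "\<dots> = Tw w \<xi>'" by (rule Tw_periodic)
  finally show ?thesis using r by blast
qed

lemma Tw_lower:
  assumes w: "Re w > 1" and hz: "hz_cond w"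
  shows "\<exists>\<delta>>0. \<forall>\<xi>. \<delta> \<le> norm (Tw w \<xi>)"
proof -
  have "continuous_on {0..2*pi} (\<lambda>\<xi>. norm (Tw w \<xi>))"
    by (intro continuous_at_imp_continuous_on ballI continuous_intros isCont_Tw[OF w])
  then obtain x where x: "x \<in> {0..2*pi}" "\<And>y. y \<in> {0..2*pi} \<Longrightarrow> norm (Tw w x) \<le> norm (Tw w y)"
    using continuous_attains_inf[of "{0..2*pi}" "\<lambda>\<xi>. norm (Tw w \<xi>)"] by auto
  have pos: "norm (Tw w x) > 0" using Tw_nonzero[OF w hz] by simp
  have "norm (Tw w x) \<le> norm (Tw w \<xi>)" for \<xi>
  proof -
    obtain \<xi>' where "0 \<le> \<xi>'" "\<xi>' < 2 * pi" "Tw w \<xi> = Tw w \<xi>'" using Tw_reduce by blast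
    thus ?thesis using x(2)[of \<xi>'] by simp
  qed
  thus ?thesis using pos by blast
qed

definition gw :: "complex \<Rightarrow> real \<Rightarrow> complex" where "gw w \<xi> = fw w \<xi> / Tw w \<xi>"

lemma isCont_gw:
  assumes w: "Re w > 1" and hz: "hz_cond w"
  shows "isCont (gw w) x"
proof -
  have "isCont (fw w) x" using isCont_fw_shift[where w=w and c=0 and x=x] w by simp
  hence "isCont (\<lambda>x. fw w x / Tw w x) x"
    using isCont_Tw[OF w, of x] Tw_nonzero[OF w hz, of x]
    by (intro continuous_intros) auto
  thus ?thesis unfolding gw_def[abs_def] .
qed

lemma gw_measurable:
  assumes w: "Re w > 1" and hz: "hz_cond w"
  shows "gw w \<in> borel_measurable lborel"
proof -
  have "continuous_on UNIV (gw w)"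
    by (intro continuous_at_imp_continuous_on ballI isCont_gw[OF w hz])
  hence "gw w \<in> borel_measurable borel" by (rule borel_measurable_continuous_onI)
  thus ?thesis by simp
qed

definition Dom :: "real \<Rightarrow> real \<Rightarrow> real" where
  "Dom s x = indicator {-1..1} x + indicator {1..} x * x powr (- s) + indicator {1..} (- x) * (- x) powr (- s)"

lemma Dom_integrable:
  assumes s: "s > 1"
  shows "integrable lborel (Dom s)"
proof -
  have i1: "integrable lborel (indicator {-1..1} :: real \<Rightarrow> real)"
    by (simp add: integrable_indicator_iff)
  have "((\<lambda>x. x powr (- s)) has_integral -(1 powr (- s + 1)) / (- s + 1)) {1..}"
    using s by (intro has_integral_powr_to_inf) auto
  hence "(\<lambda>x. x powr (- s)) integrable_on {1..}" by blast
  hence "(\<lambda>x. x powr (- s)) absolutely_integrable_on {1..}"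
    by (rule nonnegative_absolutely_integrable_1) simp
  hence "integrable lebesgue (\<lambda>x. indicator {1..} x *\<^sub>R x powr (- s))"
    by (simp add: set_integrable_def)
  hence i2: "integrable lborel (\<lambda>x. indicator {1..} x * x powr (- s))"
    by (subst (asm) integrable_completion) auto
  have i3: "integrable lborel (\<lambda>x. indicator {1..} (0 + (-1) * x) * (0 + (-1) * x) powr (- s))"
    by (rule lborel_integrable_real_affine[OF i2]) simp
  have i3': "integrable lborel (\<lambda>x. indicator {1..} (- x) * (- x) powr (- s))" using i3 by simp
  have i1': "integrable lborel (\<lambda>x::real. indicator {-1..1} x :: real)" using i1 by simp
  have "integrable lborel (\<lambda>x. indicator {-1..1} x + indicator {1..} x * x powr (- s) + indicator {1..} (- x) * (- x) powr (- s))"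
    by (rule Bochner_Integration.integrable_add[OF Bochner_Integration.integrable_add[OF i1' i2] i3'])
  thus ?thesis unfolding Dom_def[abs_def] .
qed

lemma Dom_nonneg: "Dom s x \<ge> 0"
  unfolding Dom_def by (auto simp: indicator_def)

lemma fw_le_Dom:
  assumes "Re w > 0"
  shows "norm (fw w x) \<le> exp (pi * \<bar>Im w\<bar>) * 2 powr Re w * Dom (Re w) x"
proof (cases "\<bar>x\<bar> \<le> 1")
  case True
  have "Dom (Re w) x \<ge> 1" using True Dom_nonneg unfolding Dom_def by (auto simp: indicator_def)
  moreover have "(1::real) \<le> 2 powr Re w" using assms by (simp add: ge_one_powr_ge_zero)
  ultimately have "1 \<le> 2 powr Re w * Dom (Re w) x" by (metis mult_mono' mult.right_neutral zero_le_one)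
  moreover have "norm (fw w x) \<le> exp (pi * \<bar>Im w\<bar>)" using fw_le_E assms by simp
  ultimately show ?thesis by (smt (verit, best) exp_gt_zero mult_le_cancel_left1 mult.assoc)
next
  case False
  have "norm (fw w x) \<le> exp (pi * \<bar>Im w\<bar>) * (\<bar>x\<bar>/2) powr (- Re w)"
    using False assms by (intro fw_le_far) auto
  also have "(\<bar>x\<bar>/2) powr (- Re w) = 2 powr Re w * \<bar>x\<bar> powr (- Re w)"
    using False by (simp add: powr_divide powr_minus divide_simps)
  also have "\<bar>x\<bar> powr (- Re w) \<le> Dom (Re w) x"
    using False unfolding Dom_def by (auto simp: indicator_def abs_if)
  hence "exp (pi * \<bar>Im w\<bar>) * (2 powr Re w * \<bar>x\<bar> powr (- Re w)) \<le> exp (pi * \<bar>Im w\<bar>) * 2 powr Re w * Dom (Re w) x"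
    by (simp add: mult.assoc)
  finally show ?thesis .
qed

definition em :: "int \<Rightarrow> real \<Rightarrow> complex" where
  "em m \<xi> = exp (\<i> * of_real \<xi> * of_real (of_int m))"

lemma em_periodic: "em m (\<xi> + 2 * pi * of_int k) = em m \<xi>"
proof -
  have e1: "\<i> * of_real (\<xi> + 2 * pi * of_int k) * of_real (of_int m) =
            \<i> * of_real \<xi> * of_real (of_int m) + (2 * of_int (k * m) * pi) * \<i>"
    by (simp add: algebra_simps)
  have e2: "exp ((2 * of_int (k * m) * pi) * \<i>) = 1"
    by (rule exp_integer_2pi) simp
  show ?thesis unfolding em_def by (simp only: e1 exp_add e2 mult_1_right)
qed

lemma norm_em [simp]: "norm (em m \<xi>) = 1"
proof -
  have "\<i> * of_real \<xi> * of_real (of_int m) = \<i> * of_real (\<xi> * of_int m)" by simp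
  thus ?thesis unfolding em_def by (simp only: norm_exp_i_times)
qed

lemma isCont_em: "isCont (em m) x"
  unfolding em_def[abs_def] by (intro continuous_intros)

context
  fixes w :: complex
  assumes w: "Re w > 1" and hz: "hz_cond w"
begin

lemma gw_integrable: "integrable lborel (gw w)"
proof -
  obtain \<delta> where d: "\<delta> > 0" "\<And>\<xi>. \<delta> \<le> norm (Tw w \<xi>)" using Tw_lower[OF w hz] by blast
  define C where "C = exp (pi * \<bar>Im w\<bar>) * 2 powr Re w / \<delta>"
  have I: "integrable lborel (\<lambda>x. C * Dom (Re w) x)"
    using Dom_integrable w by simp
  have B: "norm (gw w x) \<le> norm (C * Dom (Re w) x)" for x
  proof -
    have "norm (gw w x) = norm (fw w x) / norm (Tw w x)" by (simp add: gw_def norm_divide)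
    also have "\<dots> \<le> norm (fw w x) / \<delta>"
    proof -
      have dx: "\<delta> \<le> norm (Tw w x)" by (rule d(2))
      show ?thesis by (rule frac_le; use d(1) dx in auto)
    qed
    also have "\<dots> \<le> exp (pi * \<bar>Im w\<bar>) * 2 powr Re w * Dom (Re w) x / \<delta>"
      using fw_le_Dom[of w x] w d by (intro divide_right_mono) auto
    also have "\<dots> = norm (C * Dom (Re w) x)"
      using Dom_nonneg[of "Re w" x] d unfolding C_def by (simp add: abs_mult)
    finally show ?thesis .
  qed
  show ?thesis
    by (rule Bochner_Integration.integrable_bound[OF I gw_measurable[OF w hz]]) (rule AE_I2, rule B)
qed

lemma gw_bounded: "\<exists>B. \<forall>x. norm (gw w x) \<le> B"
proof -
  obtain \<delta> where d: "\<delta> > 0" "\<And>\<xi>. \<delta> \<le> norm (Tw w \<xi>)" using Tw_lower[OF w hz] by blast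
  have "norm (gw w x) \<le> exp (pi * \<bar>Im w\<bar>) / \<delta>" for x
  proof -
    have "norm (gw w x) = norm (fw w x) / norm (Tw w x)" by (simp add: gw_def norm_divide)
    also have "\<dots> \<le> norm (fw w x) / \<delta>"
    proof -
      have dx: "\<delta> \<le> norm (Tw w x)" by (rule d(2))
      show ?thesis by (rule frac_le; use d(1) dx in auto)
    qed
    also have "\<dots> \<le> exp (pi * \<bar>Im w\<bar>) / \<delta>"
      using fw_le_E[of w x] w d by (intro divide_right_mono) auto
    finally show ?thesis .
  qed
  thus ?thesis by blast
qed

lemma h_measurable: "(\<lambda>x. em m x * gw w x) \<in> borel_measurable lborel"
proof -
  have "continuous_on UNIV (\<lambda>x. em m x * gw w x)"
    by (intro continuous_at_imp_continuous_on ballI continuous_intros isCont_em isCont_gw[OF w hz])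
  hence "(\<lambda>x. em m x * gw w x) \<in> borel_measurable borel" by (rule borel_measurable_continuous_onI)
  thus ?thesis by simp
qed

lemma h_integrable: "integrable lborel (\<lambda>x. em m x * gw w x)"
  by (rule Bochner_Integration.integrable_bound[OF gw_integrable h_measurable]) (simp add: norm_mult)

end

definition PA :: "nat \<Rightarrow> real set" where
  "PA n = {2*pi*real n ..< 2*pi*(real n + 1)} \<union> {- 2*pi*(real n + 1) ..< - 2*pi*real n}"

lemma PA_sets [measurable]: "PA n \<in> sets lborel"
  unfolding PA_def by simp

lemma PA_cover: "(\<Union>n. PA n) = UNIV"
proof -
  have p: "2*pi > 0" by simp
  have "x \<in> (\<Union>n. PA n)" for x
  proof (cases "x \<ge> 0")
    case True
    define y where "y = x / (2*pi)"
    have y0: "y \<ge> 0" unfolding y_def using True by simp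
    define n where "n = nat \<lfloor>y\<rfloor>"
    have rn: "real n = of_int \<lfloor>y\<rfloor>" unfolding n_def using y0 by simp
    have "real n \<le> y" "y < real n + 1" unfolding rn by simp_all
    hence "real n * (2*pi) \<le> x" "x < (real n + 1) * (2*pi)"
      unfolding y_def using p by (simp_all only: pos_le_divide_eq pos_divide_less_eq)
    hence "x \<in> PA n" unfolding PA_def by (simp add: mult.commute)
    thus ?thesis by blast
  next
    case False
    define y where "y = - x / (2*pi)"
    have y0: "y > 0" unfolding y_def using False by (simp add: divide_neg_pos)
    define n where "n = nat (\<lceil>y\<rceil> - 1)"
    have "\<lceil>y\<rceil> \<ge> 1" using y0 by simp
    hence rn: "real n = of_int \<lceil>y\<rceil> - 1" unfolding n_def by simp
    have "real n < y" "y \<le> real n + 1" unfolding rn using ceiling_correct[of y] by simp_all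
    hence "real n * (2*pi) < - x" "- x \<le> (real n + 1) * (2*pi)"
      unfolding y_def using p by (simp_all only: pos_less_divide_eq pos_divide_le_eq)
    hence "x \<in> PA n" unfolding PA_def by (simp add: mult.commute)
    thus ?thesis by blast
  qed
  thus ?thesis by blast
qed

lemma interval_disj:
  fixes a b p :: real
  assumes "0 \<le> a" "0 \<le> b" "a + p \<le> b"
  shows "({a..<a+p} \<union> {-(a+p)..<-a}) \<inter> ({b..<b+p} \<union> {-(b+p)..<-b}) = {}"
  using assms by auto

lemma PA_alt: "PA n = {2*pi*real n ..< 2*pi*real n + 2*pi} \<union> {-(2*pi*real n + 2*pi) ..< -(2*pi*real n)}"
proof -
  have "2*pi*(real n + 1) = 2*pi*real n + 2*pi" by (simp add: algebra_simps)
  thus ?thesis unfolding PA_def by simp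
qed

lemma PA_disj:
  assumes "i \<noteq> j" shows "PA i \<inter> PA j = {}"
proof -
  have key: "2*pi*real i + 2*pi \<le> 2*pi*real j" if "i < j" for i j :: nat
  proof -
    have "2*pi*(real i + 1) \<le> 2*pi*real j" using that by (intro mult_left_mono) auto
    thus ?thesis by (simp add: algebra_simps)
  qed
  have nn: "0 \<le> 2*pi*real n" for n :: nat by simp
  show ?thesis
  proof (cases "i < j")
    case True
    show ?thesis unfolding PA_alt by (rule interval_disj[OF nn nn key[OF True]])
  next
    case False
    hence "j < i" using assms by simp
    thus ?thesis unfolding PA_alt using interval_disj[OF nn nn key[OF \<open>j < i\<close>]] by blast
  qed
qed

lemma shift_indicator_integral:
  fixes f :: "real \<Rightarrow> complex"
  shows "(\<integral>x. indicator {a..<b} x *\<^sub>R f x \<partial>lborel) = (\<integral>x. indicator {a-t..<b-t} x *\<^sub>R f (x + t) \<partial>lborel)"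
proof -
  have "(\<integral>x. indicator {a..<b} x *\<^sub>R f x \<partial>lborel) = \<bar>1\<bar> *\<^sub>R (\<integral>x. indicator {a..<b} (t + 1 * x) *\<^sub>R f (t + 1 * x) \<partial>lborel)"
    by (rule lborel_integral_real_affine) simp
  also have "\<dots> = (\<integral>x. indicator {a..<b} (t + x) *\<^sub>R f (t + x) \<partial>lborel)" by simp
  also have "\<dots> = (\<integral>x. indicator {a-t..<b-t} x *\<^sub>R f (x + t) \<partial>lborel)"
    by (rule Bochner_Integration.integral_cong) (auto simp: indicator_def add.commute)
  finally show ?thesis .
qed

lemma shift_indicator_integrable:
  fixes f :: "real \<Rightarrow> complex"
  assumes "integrable lborel f" and that: "S \<in> sets lborel"
  shows "integrable lborel (\<lambda>x. indicator S x *\<^sub>R f (x + t))"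
proof -
  have "integrable lborel (\<lambda>x. f (t + 1 * x))"
    by (rule lborel_integrable_real_affine[OF assms(1)]) simp
  hence "integrable lborel (\<lambda>x. f (x + t))" by (simp add: add.commute)
  thus ?thesis by (rule integrable_mult_indicator[OF that])
qed

lemma PA_integral:
  fixes h :: "real \<Rightarrow> complex"
  assumes h: "integrable lborel h"
  shows "(\<integral>x. indicator (PA n) x *\<^sub>R h x \<partial>lborel) =
         (\<integral>x. indicator {0..<2*pi} x *\<^sub>R (h (x + 2*pi*real n) + h (x - 2*pi*(real n + 1))) \<partial>lborel)"
proof -
  let ?P = "{2*pi*real n ..< 2*pi*(real n + 1)}" and ?N = "{- 2*pi*(real n + 1) ..< - 2*pi*real n}"
  have nn: "0 \<le> 2*pi*real n" by simp
  have "indicator (PA n) x *\<^sub>R h x = indicator ?P x *\<^sub>R h x + indicator ?N x *\<^sub>R h x" for x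
    unfolding PA_def by (auto simp: indicator_def) (smt (verit) nn)
  hence "(\<integral>x. indicator (PA n) x *\<^sub>R h x \<partial>lborel) =
         (\<integral>x. indicator ?P x *\<^sub>R h x \<partial>lborel) + (\<integral>x. indicator ?N x *\<^sub>R h x \<partial>lborel)"
    using h by (simp add: integrable_mult_indicator)
  also have "(\<integral>x. indicator ?P x *\<^sub>R h x \<partial>lborel) =
             (\<integral>x. indicator {0..<2*pi} x *\<^sub>R h (x + 2*pi*real n) \<partial>lborel)"
    using shift_indicator_integral[of "2*pi*real n" "2*pi*(real n + 1)" h "2*pi*real n"]
    by (simp add: algebra_simps)
  also have "(\<integral>x. indicator ?N x *\<^sub>R h x \<partial>lborel) =
             (\<integral>x. indicator {0..<2*pi} x *\<^sub>R h (x - 2*pi*(real n + 1)) \<partial>lborel)"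
    using shift_indicator_integral[of "- 2*pi*(real n + 1)" "- 2*pi*real n" h "- 2*pi*(real n + 1)"]
    by (simp add: algebra_simps)
  also have "(\<integral>x. indicator {0..<2*pi} x *\<^sub>R h (x + 2*pi*real n) \<partial>lborel) +
             (\<integral>x. indicator {0..<2*pi} x *\<^sub>R h (x - 2*pi*(real n + 1)) \<partial>lborel) =
             (\<integral>x. indicator {0..<2*pi} x *\<^sub>R h (x + 2*pi*real n) + indicator {0..<2*pi} x *\<^sub>R h (x - 2*pi*(real n + 1)) \<partial>lborel)"
  proof (rule Bochner_Integration.integral_add[symmetric])
    show "integrable lborel (\<lambda>x. indicator {0..<2*pi} x *\<^sub>R h (x + 2*pi*real n))"
      by (rule shift_indicator_integrable[OF h]) simp
    show "integrable lborel (\<lambda>x. indicator {0..<2*pi} x *\<^sub>R h (x - 2*pi*(real n + 1)))"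
      using shift_indicator_integrable[OF h, of "{0..<2*pi}" "- (2*pi*(real n + 1))"] by simp
  qed
  finally show ?thesis by (simp add: scaleR_add_right)
qed

lemma em_integral:
  "(\<integral>x. of_real (indicator {0..<2*pi} x) * em m x \<partial>lborel) = (if m = 0 then 2*pi else 0)"
proof -
  have "(\<integral>x. of_real (indicator {0..<2*pi} x) * em m x \<partial>lborel) = set_lebesgue_integral lborel {0..<2*pi} (em m)"
    unfolding set_lebesgue_integral_def by (simp add: scaleR_conv_of_real)
  also have "\<dots> = interval_lebesgue_integral lborel (ereal 0) (ereal (2*pi)) (em m)"
    by (rule interval_integral_Ico[symmetric]) simp
  also have "\<dots> = (if m = 0 then 2*pi else 0)"
  proof (cases "m = 0")
    case True
    have "interval_lebesgue_integral lborel (ereal 0) (ereal (2*pi)) (em m) = of_real (2*pi) - of_real 0"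
    proof (rule interval_integral_FTC_finite)
      show "continuous_on {min 0 (2*pi)..max 0 (2*pi)} (em m)"
        by (intro continuous_at_imp_continuous_on ballI isCont_em)
      show "((\<lambda>x. of_real x :: complex) has_vector_derivative em m x) (at x within {min 0 (2 * pi)..max 0 (2 * pi)})" for x
        using True by (auto simp: em_def intro!: derivative_eq_intros)
    qed
    thus ?thesis using True by simp
  next
    case False
    define F where "F x = em m x / (\<i> * of_int m)" for x
    have "interval_lebesgue_integral lborel (ereal 0) (ereal (2*pi)) (em m) = F (2*pi) - F 0"
    proof (rule interval_integral_FTC_finite)
      show "continuous_on {min 0 (2*pi)..max 0 (2*pi)} (em m)"
        by (intro continuous_at_imp_continuous_on ballI isCont_em)
      fix x :: real
      have "((\<lambda>z. exp (\<i> * z * of_real (of_int m)) / (\<i> * of_int m)) has_field_derivative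
               exp (\<i> * of_real x * of_real (of_int m))) (at (of_real x))"
        using False by (auto intro!: derivative_eq_intros simp: field_simps)
      from has_vector_derivative_real_field[OF this]
      show "(F has_vector_derivative em m x) (at x within {min 0 (2 * pi)..max 0 (2 * pi)})"
        unfolding F_def[abs_def] em_def by simp
    qed
    moreover have "em m (2*pi) = em m 0"
      using em_periodic[of m 0 1] by simp
    ultimately show ?thesis using False by (simp add: F_def)
  qed
  finally show ?thesis .
qed

context
  fixes w :: complex
  assumes w: "Re w > 1" and hz: "hz_cond w"
begin

lemma h_shift:
  "em m (x + 2*pi*real n) * gw w (x + 2*pi*real n) = em m x / Tw w x * fw w (x + 2*pi*real n)"
  "em m (x - 2*pi*(real n + 1)) * gw w (x - 2*pi*(real n + 1)) = em m x / Tw w x * fw w (x - 2*pi*(real n + 1))"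
proof -
  have "em m (x + 2*pi* of_int (int n)) = em m x" "Tw w (x + 2*pi* of_int (int n)) = Tw w x"
    by (rule em_periodic, rule Tw_periodic)
  thus "em m (x + 2*pi*real n) * gw w (x + 2*pi*real n) = em m x / Tw w x * fw w (x + 2*pi*real n)"
    by (simp add: gw_def)
  have e: "x - 2*pi*(real n + 1) = x + 2*pi* of_int (- int n - 1)" by (simp add: algebra_simps)
  have "em m (x + 2*pi* of_int (- int n - 1)) = em m x" "Tw w (x + 2*pi* of_int (- int n - 1)) = Tw w x"
    by (rule em_periodic, rule Tw_periodic)
  thus "em m (x - 2*pi*(real n + 1)) * gw w (x - 2*pi*(real n + 1)) = em m x / Tw w x * fw w (x - 2*pi*(real n + 1))"
    unfolding e by (simp add: gw_def)
qed

lemma integral_h: "(\<integral>x. em m x * gw w x \<partial>lborel) = (if m = 0 then 2*pi else 0)"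
proof -
  define h where "h x = em m x * gw w x" for x
  have hI: "integrable lborel h" unfolding h_def[abs_def] by (rule h_integrable[OF w hz])
  define F where "F n x = indicator {0..<2*pi} x *\<^sub>R (h (x + 2*pi*real n) + h (x - 2*pi*(real n + 1)))" for n x
  define c where "c x = of_real (indicator {0..<2*pi} x) * (em m x / Tw w x)" for x
  define a where "a n x = fw w (x + 2*pi*real n)" for n x
  define b where "b n x = fw w (x - 2*pi*(real n + 1))" for n x
  have Fc: "F n x = c x * (a n x + b n x)" for n x
    unfolding F_def c_def a_def b_def h_def using h_shift[of m x n]
    by (simp add: scaleR_conv_of_real algebra_simps)
  obtain \<delta> where d: "\<delta> > 0" "\<And>\<xi>. \<delta> \<le> norm (Tw w \<xi>)" using Tw_lower[OF w hz] by blast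
  define E where "E = exp (pi * \<bar>Im w\<bar>)"
  have normc: "norm (c x) \<le> indicator {0..<2*pi} x / \<delta>" for x
  proof -
    have "norm (c x) = indicator {0..<2*pi} x / norm (Tw w x)"
      unfolding c_def by (simp add: norm_mult norm_divide indicator_def)
    also have "\<dots> \<le> indicator {0..<2*pi} x / \<delta>"
    proof -
      have dx: "\<delta> \<le> norm (Tw w x)" by (rule d(2))
      show ?thesis by (rule frac_le; use d(1) dx in \<open>auto simp: indicator_def\<close>)
    qed
    finally show ?thesis .
  qed
  have step1: "(\<integral>x. h x \<partial>lborel) = (\<Sum>n. \<integral>x. indicator (PA n) x *\<^sub>R h x \<partial>lborel)"
  proof -
    have "set_integrable lborel (\<Union>i. PA i) h"
      unfolding PA_cover set_integrable_def using hI by simp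
    from lebesgue_integral_countable_add[OF PA_sets PA_disj this]
    show ?thesis unfolding PA_cover set_lebesgue_integral_def by simp
  qed
  have step2: "(\<integral>x. indicator (PA n) x *\<^sub>R h x \<partial>lborel) = integral\<^sup>L lborel (F n)" for n
    unfolding F_def by (rule PA_integral[OF hI])
  have FI: "integrable lborel (F n)" for n
  proof -
    have "integrable lborel (\<lambda>x. indicator {0..<2*pi} x *\<^sub>R h (x + 2*pi*real n) +
                                 indicator {0..<2*pi} x *\<^sub>R h (x + (- (2*pi*(real n + 1)))))"
      by (intro Bochner_Integration.integrable_add shift_indicator_integrable[OF hI]) auto
    thus ?thesis unfolding F_def[abs_def] by (simp add: scaleR_add_right)
  qed
  have Fs: "(\<lambda>n. F n x) sums (of_real (indicator {0..<2*pi} x) * em m x)" for x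
  proof -
    have "(\<lambda>n. a n x + b n x) sums Tw w x"
      unfolding a_def b_def by (rule Tw_sums[OF w])
    hence "(\<lambda>n. c x * (a n x + b n x)) sums (c x * Tw w x)" by (rule sums_mult)
    moreover have "c x * Tw w x = of_real (indicator {0..<2*pi} x) * em m x"
      unfolding c_def using Tw_nonzero[OF w hz, of x] by simp
    ultimately show ?thesis unfolding Fc by simp
  qed
  have sumnorm: "summable (\<lambda>n. norm (F n x))" for x
  proof (rule summable_comparison_test'[where N=0])
    show "summable (\<lambda>n. norm (c x) * (norm (a n x) + norm (b n x)))"
      unfolding a_def b_def using fw_summable[OF w, of x]
      by (intro summable_mult summable_add)
    show "norm (norm (F n x)) \<le> norm (c x) * (norm (a n x) + norm (b n x))" for n
      unfolding Fc by (simp add: norm_mult mult_left_mono norm_triangle_ineq)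
  qed
  have intbound: "(\<integral>x. norm (F n x) \<partial>lborel) \<le> 2*pi * (2 * E / \<delta>) * real n powr (- Re w)" if n: "n \<ge> 8" for n
  proof -
    have pt: "norm (F n x) \<le> indicator {0..<2*pi} x * (2 * E / \<delta> * real n powr (- Re w))" for x
    proof (cases "x \<in> {0..<2*pi}")
      case False
      hence "c x = 0" unfolding c_def by simp
      thus ?thesis using False unfolding Fc by simp
    next
      case True
      have "(8::real) \<le> real n" using n by simp
      moreover have x: "0 \<le> x" "x < 2*pi" using True by auto
      moreover have "\<bar>x\<bar> = x" using x(1) by (rule abs_of_nonneg)
      ultimately have "\<bar>x\<bar> \<le> real n" using pi_less_4 by linarith
      hence ab: "norm (a n x) \<le> E * real n powr (- Re w)" "norm (b n x) \<le> E * real n powr (- Re w)"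
        unfolding a_def b_def E_def using fw_shift_bounds[of w n x] w n by auto
      have "norm (F n x) = norm (c x) * norm (a n x + b n x)" unfolding Fc by (simp add: norm_mult)
      also have "\<dots> \<le> (1 / \<delta>) * (E * real n powr (- Re w) + E * real n powr (- Re w))"
      proof (rule mult_mono)
        show "norm (c x) \<le> 1 / \<delta>" using normc[of x] True by simp
        show "norm (a n x + b n x) \<le> E * real n powr (- Re w) + E * real n powr (- Re w)"
          using norm_triangle_ineq[of "a n x" "b n x"] ab by linarith
      qed (use d in auto)
      also have "\<dots> = indicator {0..<2*pi} x * (2 * E / \<delta> * real n powr (- Re w))"
        using True by simp
      finally show ?thesis .
    qed
    have "(\<integral>x. norm (F n x) \<partial>lborel) \<le> (\<integral>x. indicator {0..<2*pi} x * (2 * E / \<delta> * real n powr (- Re w)) \<partial>lborel)"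
      by (rule Bochner_Integration.integral_mono) (use FI pt in \<open>auto simp: integrable_indicator_iff\<close>)
    also have "\<dots> = 2*pi * (2 * E / \<delta> * real n powr (- Re w))"
      by (simp add: integrable_indicator_iff)
    finally show ?thesis by simp
  qed
  have sumint: "summable (\<lambda>n. \<integral>x. norm (F n x) \<partial>lborel)"
  proof (rule summable_comparison_test'[where N=8])
    show "summable (\<lambda>n. 2*pi * (2 * E / \<delta>) * real n powr (- Re w))"
      using w by (intro summable_mult summable_npowr)
    show "norm (\<integral>x. norm (F n x) \<partial>lborel) \<le> 2*pi * (2 * E / \<delta>) * real n powr (- Re w)" if "n \<ge> 8" for n
      using intbound[OF that] by (simp add: integral_nonneg_AE)
  qed
  have step3: "(\<integral>x. (\<Sum>n. F n x) \<partial>lborel) = (\<Sum>n. integral\<^sup>L lborel (F n))"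
    by (rule integral_suminf[OF FI]) (use sumnorm sumint in auto)
  have "(\<integral>x. h x \<partial>lborel) = (\<integral>x. (\<Sum>n. F n x) \<partial>lborel)"
    unfolding step1 step2 step3 ..
  also have "\<dots> = (\<integral>x. of_real (indicator {0..<2*pi} x) * em m x \<partial>lborel)"
    using Fs by (simp add: sums_iff)
  also have "\<dots> = (if m = 0 then 2*pi else 0)" by (rule em_integral)
  finally show ?thesis unfolding h_def .
qed

end

lemma admissible_hz:
  assumes "admissible_R R" "w \<in> R"
  shows "hz_cond w" "Re w > 1"
proof -
  show "Re w > 1" using assms unfolding admissible_R_def by auto
  show "hz_cond w" unfolding hz_cond_def
  proof (intro allI impI)
    fix \<alpha> :: real assume a: "0 < \<alpha> \<and> \<alpha> < 1"
    have "hurwitz_zeta w (1 - \<alpha>) + exp (- \<i> * of_real pi * w) * hurwitz_zeta w (1 - (1 - \<alpha>)) \<noteq> 0"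
    proof -
      have "\<forall>\<beta>::real. 0 < \<beta> \<and> \<beta> < 1 \<longrightarrow> hurwitz_zeta w \<beta> + exp (- \<i> * of_real pi * w) * hurwitz_zeta w (1 - \<beta>) \<noteq> 0"
        using assms unfolding admissible_R_def by blast
      hence "0 < 1 - \<alpha> \<and> 1 - \<alpha> < 1 \<longrightarrow> hurwitz_zeta w (1 - \<alpha>) + exp (- \<i> * of_real pi * w) * hurwitz_zeta w (1 - (1 - \<alpha>)) \<noteq> 0"
        by (rule spec)
      thus ?thesis using a by simp
    qed
    hence "exp (\<i> * of_real pi * w) * (hurwitz_zeta w (1 - \<alpha>) + exp (- \<i> * of_real pi * w) * hurwitz_zeta w \<alpha>) \<noteq> 0"
      by simp
    moreover have "exp (\<i> * of_real pi * w) * exp (- \<i> * of_real pi * w) = 1"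
      by (simp add: exp_add[symmetric])
    ultimately show "hurwitz_zeta w \<alpha> + exp (\<i> * of_real pi * w) * hurwitz_zeta w (1 - \<alpha>) \<noteq> 0"
      by (simp add: algebra_simps)
  qed
qed

lemma norm_vs: "norm (x *s (v::complex^4)) = norm x * norm v"
  unfolding norm_vec_def
  by (simp add: norm_mult power_mult_distrib sum_distrib_left[symmetric] real_sqrt_mult L2_set_def)

theorem theorem3:
  fixes R :: "complex set" and q :: hquat
  assumes "admissible_R R" and "q \<in> Q_R R"
  shows "(\<forall>\<xi>::real. (\<lambda>k::int. Bhat q (\<xi> + 2 * pi * of_int k)) summable_on UNIV
                    \<and> cq_invertible (Fq q \<xi>))
       \<and> integrable lborel (Lhat q)
       \<and> Lhat q \<in> borel_measurable lborel
       \<and> integrable lborel (\<lambda>\<xi>. (norm (Lhat q \<xi>))\<^sup>2)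
       \<and> (\<forall>m::int. Lq q (of_int m) = (if m = 0 then cq_one else 0))"
proof -
  define r where "r = hq_vnorm q"
  define b where "b = hq_re q"
  define w1 where "w1 = Complex b r"
  define w2 where "w2 = Complex b (- r)"
  define u1 where "u1 = (of_real (q$1 / r) :: complex)"
  define u2 where "u2 = (of_real (q$2 / r) :: complex)"
  define u3 where "u3 = (of_real (q$3 / r) :: complex)"
  let ?Q = "QF u1 u2 u3"
  define V1 where "V1 = ?Q 1 0"
  define V2 where "V2 = ?Q 0 1"
  have r0: "r \<noteq> 0" and w1R: "w1 \<in> R"
    using assms(2) unfolding Q_R_def r_def b_def w1_def by auto
  have w2R: "w2 \<in> R"
  proof -
    have "cnj w1 \<in> cnj ` R" using w1R by blast
    moreover have "cnj w1 = w2" unfolding w1_def w2_def by (simp add: complex_eq_iff)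
    ultimately show ?thesis using assms(1) unfolding admissible_R_def by simp
  qed
  note hz1 = admissible_hz[OF assms(1) w1R] and hz2 = admissible_hz[OF assms(1) w2R]
  have uu: "u1^2 + u2^2 + u3^2 = 1"
  proof -
    have hr: "r^2 = (q$1)^2 + (q$2)^2 + (q$3)^2"
      unfolding r_def hq_vnorm_def by (simp add: add_nonneg_nonneg)
    have "(q$1/r)^2 + (q$2/r)^2 + (q$3/r)^2 = ((q$1)^2 + (q$2)^2 + (q$3)^2) / r^2"
      by (simp add: power_divide add_divide_distrib)
    also have "\<dots> = r^2 / r^2" unfolding hr ..
    also have "\<dots> = 1" using r0 by simp
    finally have "(q$1/r)^2 + (q$2/r)^2 + (q$3/r)^2 = 1" .
    hence "complex_of_real ((q$1/r)^2 + (q$2/r)^2 + (q$3/r)^2) = 1" by simp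
    thus ?thesis unfolding u1_def u2_def u3_def by simp
  qed
  have Bq: "Bhat q \<xi> = ?Q (fw w1 \<xi>) (fw w2 \<xi>)" for \<xi>
    unfolding Bhat_def fw_def u1_def u2_def u3_def w1_def w2_def r_def b_def
    using cq_power_QF[of q "Xi \<xi>"] r0 unfolding r_def by simp
  have QL: "?Q P M = P *s V1 + M *s V2" for P M unfolding V1_def V2_def by (rule QF_lin)
  have hs: "((\<lambda>k::int. Bhat q (\<xi> + 2 * pi * of_int k)) has_sum ?Q (Tw w1 \<xi>) (Tw w2 \<xi>)) UNIV" for \<xi>
  proof -
    have t: "((\<lambda>k::int. fw w (\<xi> + 2 * pi * of_int k)) has_sum Tw w \<xi>) UNIV" if "Re w > 1" for w
    proof -
      have "(\<lambda>k::int. fw w (\<xi> + 2 * pi * of_int k)) summable_on UNIV"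
        using Tw_has_sum[OF that, of \<xi>] by (auto simp: summable_on_def)
      thus ?thesis unfolding Tw_def by (rule has_sum_infsum)
    qed
    have "((\<lambda>k::int. fw w1 (\<xi> + 2 * pi * of_int k) *s V1 + fw w2 (\<xi> + 2 * pi * of_int k) *s V2)
            has_sum (Tw w1 \<xi> *s V1 + Tw w2 \<xi> *s V2)) UNIV"
      by (intro has_sum_add has_sum_bounded_linear[OF bounded_linear_vs] t hz1(2) hz2(2))
    thus ?thesis unfolding Bq QL .
  qed
  have Fq: "Fq q \<xi> = ?Q (Tw w1 \<xi>) (Tw w2 \<xi>)" for \<xi>
    unfolding Fq_def using hs by (rule infsumI)
  have inv: "cq_invertible (Fq q \<xi>) \<and> cq_inverse (Fq q \<xi>) = ?Q (1 / Tw w1 \<xi>) (1 / Tw w2 \<xi>)" for \<xi>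
  proof -
    have n1: "Tw w1 \<xi> \<noteq> 0" using Tw_nonzero[OF hz1(2) hz1(1)] .
    have n2: "Tw w2 \<xi> \<noteq> 0" using Tw_nonzero[OF hz2(2) hz2(1)] .
    have "Fq q \<xi> \<otimes>\<^sub>H ?Q (1 / Tw w1 \<xi>) (1 / Tw w2 \<xi>) = cq_one"
      unfolding Fq QF_mult[OF uu] using n1 n2 by (simp add: QF_one)
    moreover have "?Q (1 / Tw w1 \<xi>) (1 / Tw w2 \<xi>) \<otimes>\<^sub>H Fq q \<xi> = cq_one"
      unfolding Fq QF_mult[OF uu] using n1 n2 by (simp add: QF_one)
    ultimately show ?thesis using cq_inverse_eq by blast
  qed
  have Lh: "Lhat q \<xi> = gw w1 \<xi> *s V1 + gw w2 \<xi> *s V2" for \<xi>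
    unfolding Lhat_def Bq using inv[of \<xi>] QF_mult[OF uu] QL by (simp add: gw_def)
  have Lh': "Lhat q = (\<lambda>\<xi>. gw w1 \<xi> *s V1 + gw w2 \<xi> *s V2)" using Lh by blast
  have LI: "integrable lborel (Lhat q)"
    unfolding Lh'
    by (intro Bochner_Integration.integrable_add integrable_bounded_linear[OF bounded_linear_vs]
              gw_integrable hz1 hz2)
  have LM: "Lhat q \<in> borel_measurable lborel" using LI by (rule borel_measurable_integrable)
  obtain B1 where B1: "\<And>x. norm (gw w1 x) \<le> B1" using gw_bounded[OF hz1(2) hz1(1)] by blast
  obtain B2 where B2: "\<And>x. norm (gw w2 x) \<le> B2" using gw_bounded[OF hz2(2) hz2(1)] by blast
  define B where "B = B1 * norm V1 + B2 * norm V2"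
  have LB: "norm (Lhat q x) \<le> B" for x
  proof -
    have "norm (Lhat q x) \<le> norm (gw w1 x *s V1) + norm (gw w2 x *s V2)"
      unfolding Lh by (rule norm_triangle_ineq)
    also have "\<dots> \<le> norm (gw w1 x) * norm V1 + norm (gw w2 x) * norm V2"
      by (simp add: norm_vs)
    also have "\<dots> \<le> B" unfolding B_def
      by (intro add_mono mult_right_mono B1 B2) auto
    finally show ?thesis .
  qed
  have L2: "integrable lborel (\<lambda>\<xi>. (norm (Lhat q \<xi>))\<^sup>2)"
  proof (rule Bochner_Integration.integrable_bound)
    show "integrable lborel (\<lambda>\<xi>. B * norm (Lhat q \<xi>))"
      using LI by (intro integrable_mult_right integrable_norm)
    show "(\<lambda>\<xi>. (norm (Lhat q \<xi>))\<^sup>2) \<in> borel_measurable lborel" using LM by measurable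
    show "AE x in lborel. norm ((norm (Lhat q x))\<^sup>2) \<le> norm (B * norm (Lhat q x))"
    proof (rule AE_I2)
      fix x
      have "B \<ge> 0" using LB[of x] norm_ge_zero[of "Lhat q x"] by linarith
      hence "(norm (Lhat q x))\<^sup>2 \<le> B * norm (Lhat q x)"
        using LB[of x] by (simp add: power2_eq_square mult_right_mono)
      thus "norm ((norm (Lhat q x))\<^sup>2) \<le> norm (B * norm (Lhat q x))" using \<open>B \<ge> 0\<close> by simp
    qed
  qed
  have LQ: "Lq q (of_int m) = (if m = 0 then cq_one else 0)" for m
  proof -
    have ee: "exp (\<i> * of_real \<xi> * of_real (of_int m)) *s Lhat q \<xi> =
              (em m \<xi> * gw w1 \<xi>) *s V1 + (em m \<xi> * gw w2 \<xi>) *s V2" for \<xi>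
      unfolding Lh em_def by (simp add: vec_eq_iff algebra_simps)
    have I1: "integrable lborel (\<lambda>\<xi>. (em m \<xi> * gw w1 \<xi>) *s V1)"
      by (intro integrable_bounded_linear[OF bounded_linear_vs] h_integrable hz1)
    have I2: "integrable lborel (\<lambda>\<xi>. (em m \<xi> * gw w2 \<xi>) *s V2)"
      by (intro integrable_bounded_linear[OF bounded_linear_vs] h_integrable hz2)
    define d where "d = (if m = 0 then complex_of_real (2*pi) else 0)"
    have "integral\<^sup>L lborel (\<lambda>\<xi>. exp (\<i> * of_real \<xi> * of_real (of_int m)) *s Lhat q \<xi>)
          = (\<integral>\<xi>. em m \<xi> * gw w1 \<xi> \<partial>lborel) *s V1 + (\<integral>\<xi>. em m \<xi> * gw w2 \<xi> \<partial>lborel) *s V2"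
      unfolding ee using I1 I2
      by (simp add: integral_bounded_linear[OF bounded_linear_vs] h_integrable hz1 hz2)
    also have "\<dots> = ?Q d d" unfolding QL d_def
      using integral_h[OF hz1(2) hz1(1), of m] integral_h[OF hz2(2) hz2(1), of m] by simp
    finally have "Lq q (of_int m) = (1 / (2*pi)) *\<^sub>R ?Q d d" unfolding Lq_def by simp
    also have "\<dots> = ?Q (of_real (1/(2*pi)) * d) (of_real (1/(2*pi)) * d)" by (rule QF_scaleR)
    also have "\<dots> = (if m = 0 then cq_one else 0)"
      unfolding d_def by (simp add: QF_one QF_zero)
    finally show ?thesis .
  qed
  show ?thesis
    using hs inv LI LM L2 LQ Fq by (auto simp: summable_on_def)
qed

end
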